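(* For every skew brace $A$, the space $\mathrm{Spec}\,A$ with the spectral topology is a $T_0$-space.
   Context: A (left) skew brace is a triple $(A,+,\circ)$ where $(A,+)$ and $(A,\circ)$ are groups such that $a\circ(b+c)=a\circ b-a+a\circ c$ for all $a,b,c$; common identity $e$. Put $\lambda_a(b)=-a+a\circ b$ and $a*b=-a+a\circ b-b$. An ideal is a normal subgroup $I$ of both $(A,+)$ and $(A,\circ)$ with $\lambda_a(I)\subseteq I$ for all $a$. A prime ideal is a proper ideal $P$ such that for any subsets $X,Y$ of $A$, $\{x*y\mid x\in X,y\in Y\}\subseteq P$ implies $X\subseteq P$ or $Y\subseteq P$; $\mathrm{Spec}\,A$ is the set of prime ideals. The spectral topology has closed sets $H(I)=\{P\in\mathrm{Spec}\,A\mid I\subseteq P\}$, $I$ an ideal. *)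

theory Defs
  imports "HOL-Algebra.Coset" "HOL-Analysis.Abstract_Topological_Spaces"
begin

definition add_grp :: "'a set \<Rightarrow> ('a \<Rightarrow> 'a \<Rightarrow> 'a) \<Rightarrow> 'a \<Rightarrow> 'a monoid" where
  "add_grp A add e = \<lparr>carrier = A, mult = add, one = e\<rparr>"

definition circ_grp :: "'a set \<Rightarrow> ('a \<Rightarrow> 'a \<Rightarrow> 'a) \<Rightarrow> 'a \<Rightarrow> 'a monoid" where
  "circ_grp A circ e = \<lparr>carrier = A, mult = circ, one = e\<rparr>"

definition skew_brace :: "'a set \<Rightarrow> ('a \<Rightarrow> 'a \<Rightarrow> 'a) \<Rightarrow> ('a \<Rightarrow> 'a \<Rightarrow> 'a) \<Rightarrow> 'a \<Rightarrow> bool" where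
  "skew_brace A add circ e \<longleftrightarrow>
     group (add_grp A add e) \<and> group (circ_grp A circ e) \<and>
     (\<forall>a\<in>A. \<forall>b\<in>A. \<forall>c\<in>A.
        circ a (add b c) = add (add (circ a b) (inv\<^bsub>add_grp A add e\<^esub> a)) (circ a c))"

definition brace_lambda :: "'a set \<Rightarrow> ('a \<Rightarrow> 'a \<Rightarrow> 'a) \<Rightarrow> ('a \<Rightarrow> 'a \<Rightarrow> 'a) \<Rightarrow> 'a \<Rightarrow> 'a \<Rightarrow> 'a \<Rightarrow> 'a" where
  "brace_lambda A add circ e a b = add (inv\<^bsub>add_grp A add e\<^esub> a) (circ a b)"

definition brace_star :: "'a set \<Rightarrow> ('a \<Rightarrow> 'a \<Rightarrow> 'a) \<Rightarrow> ('a \<Rightarrow> 'a \<Rightarrow> 'a) \<Rightarrow> 'a \<Rightarrow> 'a \<Rightarrow> 'a \<Rightarrow> 'a" where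
  "brace_star A add circ e a b =
     add (add (inv\<^bsub>add_grp A add e\<^esub> a) (circ a b)) (inv\<^bsub>add_grp A add e\<^esub> b)"

definition brace_ideal :: "'a set \<Rightarrow> ('a \<Rightarrow> 'a \<Rightarrow> 'a) \<Rightarrow> ('a \<Rightarrow> 'a \<Rightarrow> 'a) \<Rightarrow> 'a \<Rightarrow> 'a set \<Rightarrow> bool" where
  "brace_ideal A add circ e I \<longleftrightarrow>
     normal I (add_grp A add e) \<and> normal I (circ_grp A circ e) \<and>
     (\<forall>a\<in>A. brace_lambda A add circ e a ` I \<subseteq> I)"

definition brace_prime_ideal :: "'a set \<Rightarrow> ('a \<Rightarrow> 'a \<Rightarrow> 'a) \<Rightarrow> ('a \<Rightarrow> 'a \<Rightarrow> 'a) \<Rightarrow> 'a \<Rightarrow> 'a set \<Rightarrow> bool" where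
  "brace_prime_ideal A add circ e P \<longleftrightarrow>
     brace_ideal A add circ e P \<and> P \<noteq> A \<and>
     (\<forall>X Y. X \<subseteq> A \<longrightarrow> Y \<subseteq> A \<longrightarrow>
        {brace_star A add circ e x y | x y. x \<in> X \<and> y \<in> Y} \<subseteq> P \<longrightarrow> X \<subseteq> P \<or> Y \<subseteq> P)"

definition brace_Spec :: "'a set \<Rightarrow> ('a \<Rightarrow> 'a \<Rightarrow> 'a) \<Rightarrow> ('a \<Rightarrow> 'a \<Rightarrow> 'a) \<Rightarrow> 'a \<Rightarrow> 'a set set" where
  "brace_Spec A add circ e = {P. brace_prime_ideal A add circ e P}"

definition brace_H :: "'a set \<Rightarrow> ('a \<Rightarrow> 'a \<Rightarrow> 'a) \<Rightarrow> ('a \<Rightarrow> 'a \<Rightarrow> 'a) \<Rightarrow> 'a \<Rightarrow> 'a set \<Rightarrow> 'a set set" where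
  "brace_H A add circ e I = {P \<in> brace_Spec A add circ e. I \<subseteq> P}"

definition spectral_topology :: "'a set \<Rightarrow> ('a \<Rightarrow> 'a \<Rightarrow> 'a) \<Rightarrow> ('a \<Rightarrow> 'a \<Rightarrow> 'a) \<Rightarrow> 'a \<Rightarrow> 'a set topology" where
  "spectral_topology A add circ e = topology (\<lambda>U. \<exists>I. brace_ideal A add circ e I \<and>
       U = brace_Spec A add circ e - brace_H A add circ e I)"

end

theory Submission
  imports Defs
begin

lemma (in group) normal_Inter_gen:
  assumes "\<And>H. H \<in> S \<Longrightarrow> H \<lhd> G" "S \<noteq> {}"
  shows "(\<Inter>S) \<lhd> G"
proof (rule normal_invI)
  show "subgroup (\<Inter>S) G"
    using assms subgroups_Inter normal_imp_subgroup by metis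
  fix x h assume "x \<in> carrier G" "h \<in> \<Inter>S"
  then show "x \<otimes> h \<otimes> inv x \<in> \<Inter>S"
    using assms(1) normal_invE(2) by blast
qed

lemma ideal_sub:
  assumes "brace_ideal A add circ e I" shows "I \<subseteq> A"
  using assms unfolding brace_ideal_def
  by (metis normal_imp_subgroup subgroup.subset add_grp_def partial_object.select_convs(1))

lemma ideal_Inter:
  assumes sb: "skew_brace A add circ e"
    and "\<And>I. I \<in> S \<Longrightarrow> brace_ideal A add circ e I" "S \<noteq> {}"
  shows "brace_ideal A add circ e (\<Inter>S)"
proof -
  have g1: "group (add_grp A add e)" and g2: "group (circ_grp A circ e)"
    using sb unfolding skew_brace_def by auto
  have "(\<Inter>S) \<lhd> add_grp A add e"
    using group.normal_Inter_gen[OF g1, of S] assms(2,3) unfolding brace_ideal_def by blast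
  moreover have "(\<Inter>S) \<lhd> circ_grp A circ e"
    using group.normal_Inter_gen[OF g2, of S] assms(2,3) unfolding brace_ideal_def by blast
  moreover have "\<forall>a\<in>A. brace_lambda A add circ e a ` (\<Inter>S) \<subseteq> \<Inter>S"
    using assms(2) unfolding brace_ideal_def by blast
  ultimately show ?thesis unfolding brace_ideal_def by blast
qed

lemma ideal_A:
  assumes sb: "skew_brace A add circ e"
  shows "brace_ideal A add circ e A"
proof -
  have g1: "group (add_grp A add e)" and g2: "group (circ_grp A circ e)"
    using sb unfolding skew_brace_def by auto
  have "A \<lhd> add_grp A add e"
    using group.normal_invI[OF g1] group.subgroup_self[OF g1] monoid.m_closed[OF group.is_monoid[OF g1]] group.inv_closed[OF g1]
    by (simp add: add_grp_def)
  moreover have "A \<lhd> circ_grp A circ e"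
    using group.normal_invI[OF g2] group.subgroup_self[OF g2] monoid.m_closed[OF group.is_monoid[OF g2]] group.inv_closed[OF g2]
    by (simp add: circ_grp_def)
  moreover have "\<forall>a\<in>A. brace_lambda A add circ e a ` A \<subseteq> A"
    using monoid.m_closed[OF group.is_monoid[OF g1]] group.inv_closed[OF g1] monoid.m_closed[OF group.is_monoid[OF g2]]
    unfolding brace_lambda_def by (auto simp: add_grp_def circ_grp_def)
  ultimately show ?thesis unfolding brace_ideal_def by blast
qed

lemma grp_facts:
  assumes g: "group \<lparr>carrier = A, mult = m, one = e\<rparr>"
  defines "ng \<equiv> (\<lambda>a. inv\<^bsub>\<lparr>carrier = A, mult = m, one = e\<rparr>\<^esub> a)"
  shows "\<And>a b. a \<in> A \<Longrightarrow> b \<in> A \<Longrightarrow> m a b \<in> A"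
    and "\<And>a b c. a \<in> A \<Longrightarrow> b \<in> A \<Longrightarrow> c \<in> A \<Longrightarrow> m (m a b) c = m a (m b c)"
    and "\<And>a. a \<in> A \<Longrightarrow> ng a \<in> A"
    and "\<And>a. a \<in> A \<Longrightarrow> m (ng a) a = e"
    and "\<And>a. a \<in> A \<Longrightarrow> m a (ng a) = e"
    and "\<And>a. a \<in> A \<Longrightarrow> m e a = a"
    and "\<And>a. a \<in> A \<Longrightarrow> m a e = a"
    and "\<And>a. a \<in> A \<Longrightarrow> ng (ng a) = a"
    and "e \<in> A"
proof -
  interpret G: group "\<lparr>carrier = A, mult = m, one = e\<rparr>" by fact
  show "\<And>a b. a \<in> A \<Longrightarrow> b \<in> A \<Longrightarrow> m a b \<in> A" using G.m_closed by simp
  show "\<And>a b c. a \<in> A \<Longrightarrow> b \<in> A \<Longrightarrow> c \<in> A \<Longrightarrow> m (m a b) c = m a (m b c)" using G.m_assoc by simp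
  show "\<And>a. a \<in> A \<Longrightarrow> ng a \<in> A" using G.inv_closed unfolding ng_def by simp
  show "\<And>a. a \<in> A \<Longrightarrow> m (ng a) a = e" using G.l_inv unfolding ng_def by simp
  show "\<And>a. a \<in> A \<Longrightarrow> m a (ng a) = e" using G.r_inv unfolding ng_def by simp
  show "\<And>a. a \<in> A \<Longrightarrow> m e a = a" using G.l_one by simp
  show "\<And>a. a \<in> A \<Longrightarrow> m a e = a" using G.r_one by simp
  show "\<And>a. a \<in> A \<Longrightarrow> ng (ng a) = a" using G.inv_inv unfolding ng_def by simp
  show "e \<in> A" using G.one_closed by simp
qed

lemma star_in_both:
  assumes sb: "skew_brace A add circ e"
    and I: "brace_ideal A add circ e I" and J: "brace_ideal A add circ e J"
    and x: "x \<in> I" and y: "y \<in> J"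
  shows "brace_star A add circ e x y \<in> I \<inter> J"
proof -
  let ?G = "add_grp A add e" and ?C = "circ_grp A circ e"
  define ng where "ng = (\<lambda>a. inv\<^bsub>?G\<^esub> a)"
  define nc where "nc = (\<lambda>a. inv\<^bsub>?C\<^esub> a)"
  have g1: "group ?G" and g2: "group ?C"
    using sb unfolding skew_brace_def by auto
  note G = grp_facts[OF g1[unfolded add_grp_def], folded add_grp_def ng_def]
  note C = grp_facts[OF g2[unfolded circ_grp_def], folded circ_grp_def nc_def]
  have IA: "I \<subseteq> A" and JA: "J \<subseteq> A" using ideal_sub[OF I] ideal_sub[OF J] by auto
  have xA: "x \<in> A" and yA: "y \<in> A" using IA JA x y by auto
  have nI1: "I \<lhd> ?G" and nI2: "I \<lhd> ?C" and lI: "\<forall>a\<in>A. brace_lambda A add circ e a ` I \<subseteq> I"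
    using I unfolding brace_ideal_def by auto
  have nJ1: "J \<lhd> ?G" and lJ: "\<forall>a\<in>A. brace_lambda A add circ e a ` J \<subseteq> J"
    using J unfolding brace_ideal_def by auto
  have sJ: "subgroup J ?G" using nJ1 normal_imp_subgroup by blast
  have sI: "subgroup I ?G" using nI1 normal_imp_subgroup by blast
  have Jm: "\<And>a b. a \<in> J \<Longrightarrow> b \<in> J \<Longrightarrow> add a b \<in> J"
    using subgroup.m_closed[OF sJ] by (simp add: add_grp_def)
  have Im: "\<And>a b. a \<in> I \<Longrightarrow> b \<in> I \<Longrightarrow> add a b \<in> I"
    using subgroup.m_closed[OF sI] by (simp add: add_grp_def)
  have Ji: "\<And>a. a \<in> J \<Longrightarrow> ng a \<in> J"
    using subgroup.m_inv_closed[OF sJ] by (simp add: ng_def)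
  have Ii: "\<And>a. a \<in> I \<Longrightarrow> ng a \<in> I"
    using subgroup.m_inv_closed[OF sI] by (simp add: ng_def)
  have In1: "\<And>a h. a \<in> A \<Longrightarrow> h \<in> I \<Longrightarrow> add (add a h) (ng a) \<in> I"
    using group.normal_invE(2)[OF g1 nI1] by (simp add: add_grp_def ng_def)
  have In2: "\<And>a h. a \<in> A \<Longrightarrow> h \<in> I \<Longrightarrow> circ (circ a h) (nc a) \<in> I"
    using group.normal_invE(2)[OF g2 nI2] by (simp add: circ_grp_def nc_def)
  have st: "brace_star A add circ e x y = add (brace_lambda A add circ e x y) (ng y)"
    unfolding brace_star_def brace_lambda_def ng_def by simp
  have "brace_lambda A add circ e x y \<in> J" using lJ xA y by blast
  hence inJ: "brace_star A add circ e x y \<in> J"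
    using st Jm Ji y by simp
  define x' where "x' = circ (circ (nc y) x) (nc (nc y))"
  have x'I: "x' \<in> I" unfolding x'_def using In2 C(3) yA x by blast
  have x'A: "x' \<in> A" using x'I IA by auto
  have x'eq: "x' = circ (circ (nc y) x) y" unfolding x'_def using C(8) yA by simp
  have xy: "circ x y = circ y x'"
    unfolding x'eq using xA yA C(1-7) by (simp add: C(2)[symmetric])
  define l where "l = brace_lambda A add circ e y x'"
  have lI': "l \<in> I" using lI yA x'I unfolding l_def by blast
  have lA: "l \<in> A" using lI' IA by auto
  have cyA: "circ y x' \<in> A" using C(1) yA x'A by blast
  have yx': "circ y x' = add y l"
    unfolding l_def brace_lambda_def ng_def[symmetric] using yA cyA G(1-7)
    by (simp add: G(2)[symmetric])
  have "brace_star A add circ e x y = add (ng x) (add (add y l) (ng y))"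
    unfolding brace_star_def ng_def[symmetric] xy yx'
    using G(1-7) xA yA lA by simp
  moreover have "add (add y l) (ng y) \<in> I" using In1 yA lI' by blast
  ultimately have "brace_star A add circ e x y \<in> I"
    using Im Ii x by simp
  with inJ show ?thesis by blast
qed

theorem proposition4p6:
  fixes A :: "'a set" and add circ :: "'a \<Rightarrow> 'a \<Rightarrow> 'a" and e :: 'a
  assumes "skew_brace A add circ e"
  shows "t0_space (spectral_topology A add circ e)"
proof -
  note sb = assms
  let ?Sp = "brace_Spec A add circ e"
  let ?H = "brace_H A add circ e"
  let ?id = "brace_ideal A add circ e"
  define L where "L = (\<lambda>U. \<exists>I. ?id I \<and> U = ?Sp - ?H I)"
  have prime: "\<And>P. P \<in> ?Sp \<Longrightarrow> ?id P \<and> P \<noteq> A \<and> (\<forall>X Y. X \<subseteq> A \<longrightarrow> Y \<subseteq> A \<longrightarrow>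
        {brace_star A add circ e x y | x y. x \<in> X \<and> y \<in> Y} \<subseteq> P \<longrightarrow> X \<subseteq> P \<or> Y \<subseteq> P)"
    unfolding brace_Spec_def brace_prime_ideal_def by blast
  have Hdef: "\<And>I. ?H I = {P \<in> ?Sp. I \<subseteq> P}" unfolding brace_H_def by simp
  have top: "istopology L"
    unfolding istopology_def
  proof (intro conjI allI impI)
    fix S T assume "L S" "L T"
    then obtain I J where I: "?id I" "S = ?Sp - ?H I" and J: "?id J" "T = ?Sp - ?H J"
      unfolding L_def by blast
    have IJ: "?id (I \<inter> J)" using ideal_Inter[OF sb, of "{I, J}"] I J by auto
    have "S \<inter> T = ?Sp - ?H (I \<inter> J)"
    proof
      show "S \<inter> T \<subseteq> ?Sp - ?H (I \<inter> J)"
      proof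
        fix P assume P: "P \<in> S \<inter> T"
        hence PS: "P \<in> ?Sp" "\<not> I \<subseteq> P" "\<not> J \<subseteq> P" using I J Hdef by auto
        have "\<not> (I \<inter> J) \<subseteq> P"
        proof
          assume sub: "I \<inter> J \<subseteq> P"
          have "{brace_star A add circ e x y | x y. x \<in> I \<and> y \<in> J} \<subseteq> P"
            using star_in_both[OF sb I(1) J(1)] sub by blast
          moreover have "\<forall>X Y. X \<subseteq> A \<longrightarrow> Y \<subseteq> A \<longrightarrow>
            {brace_star A add circ e x y | x y. x \<in> X \<and> y \<in> Y} \<subseteq> P \<longrightarrow> X \<subseteq> P \<or> Y \<subseteq> P"
            using prime[OF PS(1)] by blast
          ultimately have "I \<subseteq> P \<or> J \<subseteq> P" using ideal_sub[OF I(1)] ideal_sub[OF J(1)] by blast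
          then show False using PS by blast
        qed
        then show "P \<in> ?Sp - ?H (I \<inter> J)" using PS Hdef by auto
      qed
    next
      show "?Sp - ?H (I \<inter> J) \<subseteq> S \<inter> T" using I J Hdef by auto
    qed
    then show "L (S \<inter> T)" unfolding L_def using IJ by blast
  next
    fix K assume K: "\<forall>U\<in>K. L U"
    define f where "f = (\<lambda>U. SOME I. ?id I \<and> U = ?Sp - ?H I)"
    have f: "\<And>U. U \<in> K \<Longrightarrow> ?id (f U) \<and> U = ?Sp - ?H (f U)"
      proof -
      fix U assume "U \<in> K"
      hence "\<exists>I. ?id I \<and> U = ?Sp - ?H I" using K unfolding L_def by blast
      then show "?id (f U) \<and> U = ?Sp - ?H (f U)" unfolding f_def by (rule someI_ex)
    qed
    define G where "G = \<Inter>{J. ?id J \<and> (\<forall>U\<in>K. f U \<subseteq> J)}"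
    have Ain: "A \<in> {J. ?id J \<and> (\<forall>U\<in>K. f U \<subseteq> J)}"
    proof -
      have "\<forall>U\<in>K. f U \<subseteq> A"
      proof
        fix U assume "U \<in> K"
        then show "f U \<subseteq> A" using f ideal_sub by metis
      qed
      then show ?thesis using ideal_A[OF sb] by simp
    qed
    have G: "?id G" unfolding G_def
      by (rule ideal_Inter[OF sb]) (use Ain in auto)
    have "\<Union>K = ?Sp - ?H G"
    proof
      show "\<Union>K \<subseteq> ?Sp - ?H G"
      proof
        fix P assume "P \<in> \<Union>K"
        then obtain U where U: "U \<in> K" "P \<in> U" by blast
        hence "P \<in> ?Sp" "\<not> f U \<subseteq> P" using f[OF U(1)] Hdef by auto
        moreover have "f U \<subseteq> G" unfolding G_def using U(1) by blast
        ultimately show "P \<in> ?Sp - ?H G" using Hdef by auto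
      qed
    next
      show "?Sp - ?H G \<subseteq> \<Union>K"
      proof
        fix P assume P: "P \<in> ?Sp - ?H G"
        hence PS: "P \<in> ?Sp" "\<not> G \<subseteq> P" using Hdef by auto
        have "\<exists>U\<in>K. \<not> f U \<subseteq> P"
        proof (rule ccontr)
          assume "\<not> ?thesis"
          moreover have "?id P" using prime[OF PS(1)] by blast
          ultimately have "P \<in> {J. ?id J \<and> (\<forall>U\<in>K. f U \<subseteq> J)}" by blast
          hence "G \<subseteq> P" unfolding G_def by blast
          with PS show False by blast
        qed
        then obtain U where "U \<in> K" "\<not> f U \<subseteq> P" by blast
        then show "P \<in> \<Union>K" using f PS Hdef by blast
      qed
    qed
    then show "L (\<Union>K)" unfolding L_def using G by blast
  qed
  have op: "openin (spectral_topology A add circ e) = L"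
    unfolding spectral_topology_def L_def[symmetric] using top by simp
  have HA: "?H A = {}"
  proof -
    have "\<And>P. P \<in> ?Sp \<Longrightarrow> \<not> A \<subseteq> P"
    proof -
      fix P assume "P \<in> ?Sp"
      hence "?id P" "P \<noteq> A" using prime by blast+
      then show "\<not> A \<subseteq> P" using ideal_sub[of A add circ e P] by auto
    qed
    then show ?thesis unfolding Hdef by auto
  qed
  have ts: "topspace (spectral_topology A add circ e) = ?Sp"
  proof
    show "topspace (spectral_topology A add circ e) \<subseteq> ?Sp"
      unfolding topspace_def op L_def by blast
    have "openin (spectral_topology A add circ e) ?Sp"
      unfolding op L_def using ideal_A[OF sb] HA by auto
    then show "?Sp \<subseteq> topspace (spectral_topology A add circ e)"
      by (simp add: openin_subset)
  qed
  show ?thesis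
    unfolding t0_space_def ts
  proof (intro ballI impI)
    fix P Q assume P: "P \<in> ?Sp" and Q: "Q \<in> ?Sp" and ne: "P \<noteq> Q"
    show "\<exists>U. openin (spectral_topology A add circ e) U \<and> (P \<notin> U \<longleftrightarrow> Q \<in> U)"
    proof (cases "P \<subseteq> Q")
      case False
      have "openin (spectral_topology A add circ e) (?Sp - ?H P)"
      proof -
        have "?id P" using prime[OF P] by (rule conjunct1)
        then show ?thesis unfolding op L_def by blast
      qed
      moreover have "P \<notin> ?Sp - ?H P" "Q \<in> ?Sp - ?H P" using P Q False Hdef by auto
      ultimately show ?thesis by blast
    next
      case True
      hence "\<not> Q \<subseteq> P" using ne by blast
      have "openin (spectral_topology A add circ e) (?Sp - ?H Q)"
      proof -
        have "?id Q" using prime[OF Q] by (rule conjunct1)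
        then show ?thesis unfolding op L_def by blast
      qed
      moreover have "P \<in> ?Sp - ?H Q" "Q \<notin> ?Sp - ?H Q" using P Q \<open>\<not> Q \<subseteq> P\<close> Hdef by auto
      ultimately show ?thesis by blast
    qed
  qed
qed

end
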